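(* For every contractor network, the matrix $\mathbf I-\mathbf A\mathbf W$ is invertible and the Neumann series $\sum_{t=0}^\infty(\mathbf A\mathbf W)^t$ converges to $(\mathbf I-\mathbf A\mathbf W)^{-1}$.
   Context: A contractor network is a finite directed graph $G=(\mathcal V,\mathcal E)$ with $n=|\mathcal V|$ nodes, without multiple edges (self-loops and directed cycles are allowed), in which every node has at least one incident edge. For $i\in\mathcal V$ let $\delta_{\mathrm{in}}(i)=\{j:(j,i)\in\mathcal E\}$ and $\delta_{\mathrm{out}}(i)=\{k:(i,k)\in\mathcal E\}$. A node $i$ is a pure principal if $\delta_{\mathrm{in}}(i)=\emptyset$, a pure obligee if $\delta_{\mathrm{out}}(i)=\emptyset$, and an intermediary otherwise. Each edge $(j,i)\in\mathcal E$ carries a weight $w_{ij}>0$; set $w_{ij}=0$ if $(j,i)\notin\mathcal E$; for every node $i$ with $\delta_{\mathrm{in}}(i)\neq\emptyset$ we have $\sum_{j\in\delta_{\mathrm{in}}(i)}w_{ij}=1$. Let $\mathbf W=(w_{ij})_{i,j\in\mathcal V}$. Each node has a propagation parameter $\alpha_i$, with $\alpha_i=0$ for pure principals, $\alpha_i=1$ for pure obligees, and $\alpha_i\in(0,1)$ for intermediaries; $\mathbf A=\mathrm{diag}(\alpha_i)_{i\in\mathcal V}$. *)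

theory Defs
  imports "HOL-Analysis.Analysis"
begin

text \<open>Nodes of the network are the elements of a finite type 'n; the edge set is
  E :: ('n \<times> 'n) set (a set of ordered pairs, hence no multiple edges; self loops allowed).
  The weight matrix W is indexed so that W $ i $ j = w_ij, the weight of edge (j,i).\<close>

definition in_nbrs :: "('n \<times> 'n) set \<Rightarrow> 'n \<Rightarrow> 'n set" where
  "in_nbrs E i = {j. (j, i) \<in> E}"

definition out_nbrs :: "('n \<times> 'n) set \<Rightarrow> 'n \<Rightarrow> 'n set" where
  "out_nbrs E i = {k. (i, k) \<in> E}"

definition contractor_network ::
  "('n::finite \<times> 'n) set \<Rightarrow> real^'n^'n \<Rightarrow> ('n \<Rightarrow> real) \<Rightarrow> bool" where
  "contractor_network E W \<alpha> \<longleftrightarrow>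
     (\<forall>i. in_nbrs E i \<noteq> {} \<or> out_nbrs E i \<noteq> {}) \<and>
     (\<forall>i j. (j, i) \<in> E \<longrightarrow> W $ i $ j > 0) \<and>
     (\<forall>i j. (j, i) \<notin> E \<longrightarrow> W $ i $ j = 0) \<and>
     (\<forall>i. in_nbrs E i \<noteq> {} \<longrightarrow> (\<Sum>j\<in>in_nbrs E i. W $ i $ j) = 1) \<and>
     (\<forall>i. in_nbrs E i = {} \<longrightarrow> \<alpha> i = 0) \<and>
     (\<forall>i. out_nbrs E i = {} \<longrightarrow> \<alpha> i = 1) \<and>
     (\<forall>i. in_nbrs E i \<noteq> {} \<and> out_nbrs E i \<noteq> {} \<longrightarrow> 0 < \<alpha> i \<and> \<alpha> i < 1)"

definition diag_mat :: "('n::finite \<Rightarrow> real) \<Rightarrow> real^'n^'n" where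
  "diag_mat a = (\<chi> i j. if i = j then a i else 0)"

text \<open>Matrix power w.r.t. matrix multiplication (the type's own * is entrywise).\<close>
definition mat_pow :: "real^'n^'n \<Rightarrow> nat \<Rightarrow> real^'n^'n" where
  "mat_pow M t = ((\<lambda>X. M ** X) ^^ t) (mat 1)"

end

theory Submission imports Defs begin


lemma bl_mm: "bounded_linear (\<lambda>X::real^'n::finite^'n. A ** X)"
proof -
  have "linear (\<lambda>X::real^'n::finite^'n. A ** X)"
    by (rule linearI) (auto simp: matrix_add_ldistrib matrix_matrix_mult_def vec_eq_iff sum_distrib_left sum.distrib algebra_simps)
  then show ?thesis by (rule linear_conv_bounded_linear[THEN iffD1])
qed

lemma mat_pow_Suc: "mat_pow M (Suc t) = M ** mat_pow M t"
  by (simp add: mat_pow_def)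

lemma mat_pow_Suc': "mat_pow M (Suc t) = mat_pow M t ** M"
  by (induction t) (simp_all add: mat_pow_def matrix_mul_assoc)

lemma mat_pow_0: "mat_pow M 0 = mat 1" by (simp add: mat_pow_def)

lemma norm_mat_le: "norm (X::real^'n::finite^'n) \<le> (\<Sum>i\<in>UNIV. \<Sum>j\<in>UNIV. \<bar>X$i$j\<bar>)"
proof -
  have "norm X \<le> (\<Sum>i\<in>UNIV. norm (X$i))" unfolding norm_vec_def by (rule L2_set_le_sum) simp
  also have "\<dots> \<le> (\<Sum>i\<in>UNIV. \<Sum>j\<in>UNIV. \<bar>X$i$j\<bar>)" by (intro sum_mono norm_le_l1_cart)
  finally show ?thesis .
qed


lemma mm_diff_r: "((A::real^'n::finite^'n) - B) ** X = A ** X - B ** X"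
  by (simp add: matrix_matrix_mult_def vec_eq_iff left_diff_distrib sum_subtractf)

lemma neumann_generic:
  fixes M :: "real^'n::finite^'n"
  assumes sn: "summable (\<lambda>t. norm (mat_pow M t))"
  shows "invertible (mat 1 - M) \<and> (\<lambda>t. mat_pow M t) sums matrix_inv (mat 1 - M)"
proof -
  have sm: "summable (mat_pow M)" using sn by (rule summable_norm_cancel)
  define S where "S = suminf (mat_pow M)"
  have sS: "mat_pow M sums S" using sm unfolding S_def by (rule summable_sums)
  have z: "mat_pow M \<longlonglongrightarrow> 0"
    using summable_LIMSEQ_zero[OF sn] by (simp add: tendsto_norm_zero_iff)
  have s1: "(\<lambda>t. (mat 1 - M) ** mat_pow M t) sums ((mat 1 - M) ** S)"
    by (rule bounded_linear.sums[OF bl_mm sS])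
  have eq: "(mat 1 - M) ** mat_pow M t = mat_pow M t - mat_pow M (Suc t)" for t
    by (simp add: mat_pow_Suc mm_diff_r)
  have s2: "(\<lambda>t. (mat 1 - M) ** mat_pow M t) sums (mat 1 - 0)"
    unfolding eq using telescope_sums'[OF z] by (simp add: mat_pow_0)
  have r: "(mat 1 - M) ** S = mat 1" using sums_unique2[OF s1 s2] by simp
  have l: "S ** (mat 1 - M) = mat 1" using r matrix_left_right_inverse by blast
  have inv: "invertible (mat 1 - M)" unfolding invertible_def using r l by blast
  have "matrix_inv (mat 1 - M) = S"
    unfolding matrix_inv_def
  proof (rule some_equality)
    fix B assume B: "(mat 1 - M) ** B = mat 1 \<and> B ** (mat 1 - M) = mat 1"
    have "B = (S ** (mat 1 - M)) ** B" using l by simp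
    also have "\<dots> = S" using B by (simp add: matrix_mul_assoc[symmetric])
    finally show "B = S" .
  qed (use r l in blast)
  with inv sS show ?thesis by simp
qed

definition rs :: "real^'n::finite^'n \<Rightarrow> 'n \<Rightarrow> real" where
  "rs X i = (\<Sum>j\<in>UNIV. X$i$j)"

definition nn :: "real^'n::finite^'n \<Rightarrow> bool" where
  "nn X \<longleftrightarrow> (\<forall>i j. 0 \<le> X$i$j)"

lemma rs_mult_eq: "rs (X ** Y) i = (\<Sum>k\<in>UNIV. X$i$k * rs Y k)"
  unfolding rs_def matrix_matrix_mult_def
  by (simp add: sum_distrib_left) (rule sum.swap)

lemma rs_mult_le:
  assumes "nn X" "\<And>k. rs Y k \<le> b k"
  shows "rs (X ** Y) i \<le> (\<Sum>k\<in>UNIV. X$i$k * b k)"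
  unfolding rs_mult_eq using assms unfolding nn_def
  by (intro sum_mono mult_left_mono) auto

lemma nn_mult: "nn X \<Longrightarrow> nn Y \<Longrightarrow> nn (X ** Y)"
  unfolding nn_def matrix_matrix_mult_def by (auto intro!: sum_nonneg)

lemma nn_pow: "nn M \<Longrightarrow> nn (mat_pow M t)"
proof (induction t)
  case 0 then show ?case by (auto simp: mat_pow_0 nn_def mat_def)
next
  case (Suc t) then show ?case by (simp add: mat_pow_Suc nn_mult)
qed

lemma entry_le_rs: "nn X \<Longrightarrow> X$i$j \<le> rs X i"
  unfolding rs_def nn_def by (rule member_le_sum) auto

lemma pow_bound:
  fixes M :: "real^'n::finite^'n"
  assumes nM: "nn M" and r1: "\<And>i. rs M i \<le> 1" and c: "0 \<le> c"
    and r2: "\<And>i. rs (M ** M) i \<le> c"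
  shows "rs (mat_pow M t) i \<le> c ^ (t div 2)"
proof -
  have "(\<forall>i. rs (mat_pow M t) i \<le> c ^ (t div 2)) \<and> (\<forall>i. rs (mat_pow M (Suc t)) i \<le> c ^ (Suc t div 2))"
  proof (induction t)
    case 0
    have "rs (mat 1 :: real^'n^'n) i = 1" for i
      unfolding rs_def mat_def by (simp add: if_distrib cong: if_cong)
    then show ?case using r1 by (simp add: mat_pow_0 mat_pow_Suc)
  next
    case (Suc t)
    have "rs (mat_pow M (Suc (Suc t))) i \<le> c ^ (Suc (Suc t) div 2)" for i
    proof -
      have e: "mat_pow M (Suc (Suc t)) = (M ** M) ** mat_pow M t"
        by (simp add: mat_pow_Suc matrix_mul_assoc)
      have "rs (mat_pow M (Suc (Suc t))) i \<le> (\<Sum>k\<in>UNIV. (M ** M)$i$k * c ^ (t div 2))"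
        unfolding e using Suc.IH by (intro rs_mult_le nn_mult nM) auto
      also have "\<dots> = rs (M ** M) i * c ^ (t div 2)" by (simp add: rs_def sum_distrib_right)
      also have "\<dots> \<le> c * c ^ (t div 2)" using r2 c by (intro mult_right_mono) auto
      finally show ?thesis by simp
    qed
    then show ?case using Suc.IH by simp
  qed
  then show ?thesis by blast
qed

lemma summable_div2:
  fixes c :: real
  assumes "0 \<le> c" "c < 1"
  shows "summable (\<lambda>t. K * c ^ (t div 2))"
proof -
  define d where "d = max c (1/2)"
  define s where "s = sqrt d"
  have d: "0 < d" "d < 1" "c \<le> d" using assms by (auto simp: d_def)
  have s: "0 < s" "s < 1" using d by (auto simp: s_def)
  have sd: "s^2 = d" using d by (simp add: s_def)
  have b: "norm (K * c ^ (t div 2)) \<le> (\<bar>K\<bar> / s) * s ^ t" for t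
  proof -
    have "c ^ (t div 2) \<le> d ^ (t div 2)" using assms d by (intro power_mono) auto
    also have "\<dots> = s ^ (2 * (t div 2))" by (simp add: power_mult sd)
    also have "\<dots> = (s ^ (2 * (t div 2) + 1)) / s" using s by simp
    also have "\<dots> \<le> s ^ t / s"
      using s by (intro divide_right_mono power_decreasing) auto
    finally have "c ^ (t div 2) \<le> s ^ t / s" .
    then have "\<bar>K\<bar> * c ^ (t div 2) \<le> \<bar>K\<bar> * (s ^ t / s)" by (intro mult_left_mono) auto
    then show ?thesis using assms by (simp add: abs_mult)
  qed
  show ?thesis
  proof (rule summable_comparison_test)
    show "\<exists>N. \<forall>n\<ge>N. norm (K * c ^ (n div 2)) \<le> (\<bar>K\<bar> / s) * s ^ n" using b by blast
    show "summable (\<lambda>n. (\<bar>K\<bar> / s) * s ^ n)"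
      by (rule summable_mult, rule summable_geometric) (use s in auto)
  qed
qed

lemma diag_mult_entry: "(diag_mat a ** W) $ i $ j = a i * W $ i $ j"
proof -
  have *: "\<And>k. (if i = k then a i else 0) * W$k$j = (if k = i then a i * W$i$j else 0)" by auto
  show ?thesis unfolding diag_mat_def matrix_matrix_mult_def by (simp add: *)
qed

theorem mainTheorem3:
  fixes E :: "('n::finite \<times> 'n) set" and W :: "real^'n^'n" and \<alpha> :: "'n \<Rightarrow> real"
  assumes "contractor_network E W \<alpha>"
  shows "invertible (mat 1 - diag_mat \<alpha> ** W)
         \<and> (\<lambda>t. mat_pow (diag_mat \<alpha> ** W) t) sums matrix_inv (mat 1 - diag_mat \<alpha> ** W)"
proof -
  define M where "M = diag_mat \<alpha> ** W"
  note cn = assms[unfolded contractor_network_def]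
  have Me: "M $ i $ j = \<alpha> i * W $ i $ j" for i j by (simp add: M_def diag_mult_entry)
  have Wnn: "0 \<le> W $ i $ j" for i j using cn by (cases "(j, i) \<in> E") (auto intro: less_imp_le)
  have h5: "\<forall>i. in_nbrs E i = {} \<longrightarrow> \<alpha> i = 0" using cn by blast
  have h6: "\<forall>i. out_nbrs E i = {} \<longrightarrow> \<alpha> i = 1" using cn by blast
  have h7: "\<forall>i. in_nbrs E i \<noteq> {} \<and> out_nbrs E i \<noteq> {} \<longrightarrow> 0 < \<alpha> i \<and> \<alpha> i < 1" using cn by blast
  have a01: "0 \<le> \<alpha> i \<and> \<alpha> i \<le> 1" for i
  proof (cases "in_nbrs E i = {}")
    case True then show ?thesis using h5 by simp
  next
    case False then show ?thesis using h6 h7 by (cases "out_nbrs E i = {}") auto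
  qed
  have nM: "nn M" unfolding nn_def Me using Wnn a01 by auto
  have rsW: "rs W i = (\<Sum>j\<in>in_nbrs E i. W $ i $ j)" for i
    unfolding rs_def
    by (rule sum.mono_neutral_right) (use cn in \<open>auto simp: in_nbrs_def\<close>)
  have rsW1: "in_nbrs E i \<noteq> {} \<Longrightarrow> rs W i = 1" for i using cn rsW by auto
  have rsW0: "in_nbrs E i = {} \<Longrightarrow> rs W i = 0" for i using rsW by simp
  have rsM: "rs M i = \<alpha> i * rs W i" for i unfolding rs_def Me by (simp add: sum_distrib_left)
  have r1: "rs M i \<le> 1" for i
    using a01[of i] rsW0[of i] rsW1[of i] rsM[of i] by (cases "in_nbrs E i = {}") auto
  have rlt: "out_nbrs E j \<noteq> {} \<Longrightarrow> rs M j < 1" for j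
    using cn rsW0[of j] rsW1[of j] rsM[of j] by (cases "in_nbrs E j = {}") auto
  define c where "c = Max (insert 0 (rs M ` {j. out_nbrs E j \<noteq> {}}))"
  have c0: "0 \<le> c" unfolding c_def by simp
  have c1: "c < 1" unfolding c_def using rlt by (subst Max_less_iff) auto
  have cge: "out_nbrs E j \<noteq> {} \<Longrightarrow> rs M j \<le> c" for j unfolding c_def
    by (rule Max_ge) auto
  have edge: "M $ i $ j \<noteq> 0 \<Longrightarrow> out_nbrs E j \<noteq> {}" for i j
    using cn unfolding Me out_nbrs_def by force
  have r2: "rs (M ** M) i \<le> c" for i
  proof -
    have "rs (M ** M) i = (\<Sum>k\<in>UNIV. M$i$k * rs M k)" by (rule rs_mult_eq)
    also have "\<dots> \<le> (\<Sum>k\<in>UNIV. M$i$k * c)"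
    proof (rule sum_mono)
      fix k show "M$i$k * rs M k \<le> M$i$k * c"
        using edge[of i k] cge[of k] nM unfolding nn_def
        by (cases "M$i$k = 0") (auto intro: mult_left_mono)
    qed
    also have "\<dots> = rs M i * c" by (simp add: rs_def sum_distrib_right)
    also have "\<dots> \<le> 1 * c" using r1 c0 by (intro mult_right_mono) auto
    finally show ?thesis by simp
  qed
  have nb: "norm (mat_pow M t) \<le> real (CARD('n) * CARD('n)) * c ^ (t div 2)" for t
  proof -
    have "norm (mat_pow M t) \<le> (\<Sum>i\<in>UNIV. \<Sum>j\<in>UNIV. \<bar>mat_pow M t $ i $ j\<bar>)" by (rule norm_mat_le)
    also have "\<dots> \<le> (\<Sum>i\<in>(UNIV::'n set). \<Sum>j\<in>(UNIV::'n set). c ^ (t div 2))"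
    proof (intro sum_mono)
      fix i j
      have "0 \<le> mat_pow M t $ i $ j" using nn_pow[OF nM] unfolding nn_def by blast
      moreover have "mat_pow M t $ i $ j \<le> c ^ (t div 2)"
        using entry_le_rs[OF nn_pow[OF nM]] pow_bound[OF nM r1 c0 r2] order_trans by blast
      ultimately show "\<bar>mat_pow M t $ i $ j\<bar> \<le> c ^ (t div 2)" by simp
    qed
    also have "\<dots> = real (CARD('n) * CARD('n)) * c ^ (t div 2)" by simp
    finally show ?thesis .
  qed
  have "summable (\<lambda>t. norm (mat_pow M t))"
    by (rule summable_comparison_test[OF _ summable_div2[OF c0 c1]]) (use nb in auto)
  from neumann_generic[OF this] show ?thesis unfolding M_def .
qed
end
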